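(* (1) For $\lambda\in[0,1)$, $\mathbb{L}^{>\lambda}(\mathrm{QBA}|\mathrm{D})$ is not closed under intersection. (2) For $\lambda\in[0,1)$, $\mathbb{L}^{>\lambda}(\mathrm{QBA}|\mathrm{D})$ is not closed under complementation (relative to $\Sigma^\omega$).
   Context: A quantum automaton is a tuple $\mathcal{A}=(\mathcal{H},|s_0\rangle,\Sigma,\{U_\sigma:\sigma\in\Sigma\},F)$ where $\mathcal{H}$ is a finite-dimensional complex Hilbert space, $|s_0\rangle$ a unit vector, $\Sigma$ a finite alphabet, each $U_\sigma$ unitary, and $F$ a subspace. For $w=\sigma_1\sigma_2\cdots\in\Sigma^\omega$, a unit vector $|\psi\rangle\in F$ and checkpoints $0\le n_1<n_2<\cdots$, the disturbing run is $|s_0\rangle$ and for $n\ge1$: $|s_n\rangle=U_{\sigma_n}|\psi\rangle$ if $n-1=n_i$ for some $i$, else $|s_n\rangle=U_{\sigma_n}|s_{n-1}\rangle$; $f^{\mathrm{D}}_{\mathcal{A}}(w)=\sup_{|\psi\rangle}\sup_{\{n_i\}}\inf_{i\ge1}|\langle\psi|s_{n_i}\rangle|^2$ over unit $|\psi\rangle\in F$ and strictly increasing checkpoint sequences. $\mathcal{L}^{>\lambda}(\mathcal{A}|\mathrm{D})=\{w:f^{\mathrm{D}}_{\mathcal{A}}(w)>\lambda\}$ and $\mathbb{L}^{>\lambda}(\mathrm{QBA}|\mathrm{D})$ is the class of all such languages over all quantum automata. *)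

theory Defs
  imports "Jordan_Normal_Form.Matrix"
begin

(* Quantum automaton over letters of type nat, Hilbert space C^dim. *)
record qa =
  qa_dim :: nat
  qa_init :: "complex vec"
  qa_U :: "nat \<Rightarrow> complex mat"
  qa_F :: "complex vec set"

definition cadj :: "complex mat \<Rightarrow> complex mat" where
  "cadj U = mat (dim_col U) (dim_row U) (\<lambda>(i,j). cnj (U $$ (j,i)))"

definition unitary_mat :: "nat \<Rightarrow> complex mat \<Rightarrow> bool" where
  "unitary_mat n U \<longleftrightarrow> U \<in> carrier_mat n n \<and> U * cadj U = 1\<^sub>m n \<and> cadj U * U = 1\<^sub>m n"

definition unit_vec_in :: "nat \<Rightarrow> complex vec \<Rightarrow> bool" where
  "unit_vec_in n v \<longleftrightarrow> v \<in> carrier_vec n \<and> v \<bullet>c v = 1"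

definition subspace_of :: "nat \<Rightarrow> complex vec set \<Rightarrow> bool" where
  "subspace_of n F \<longleftrightarrow> F \<subseteq> carrier_vec n \<and> 0\<^sub>v n \<in> F \<and>
     (\<forall>u\<in>F. \<forall>v\<in>F. u + v \<in> F) \<and> (\<forall>c. \<forall>v\<in>F. c \<cdot>\<^sub>v v \<in> F)"

(* A is a quantum automaton over the finite alphabet Sg *)
definition is_qa :: "nat set \<Rightarrow> qa \<Rightarrow> bool" where
  "is_qa Sg A \<longleftrightarrow> finite Sg \<and> unit_vec_in (qa_dim A) (qa_init A) \<and>
     (\<forall>a\<in>Sg. unitary_mat (qa_dim A) (qa_U A a)) \<and> subspace_of (qa_dim A) (qa_F A)"

(* infinite words over Sg: w i is the letter sigma_{i+1} *)
definition omega_words :: "nat set \<Rightarrow> (nat \<Rightarrow> nat) set" where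
  "omega_words Sg = {w. \<forall>i. w i \<in> Sg}"

(* disturbing run; checkpoints n_1 < n_2 < ... are given by strictly monotone ns (ns 0 = n_1) *)
fun drun :: "qa \<Rightarrow> (nat \<Rightarrow> nat) \<Rightarrow> complex vec \<Rightarrow> (nat \<Rightarrow> nat) \<Rightarrow> nat \<Rightarrow> complex vec" where
  "drun A w psi ns 0 = qa_init A"
| "drun A w psi ns (Suc n) =
     qa_U A (w n) *\<^sub>v (if n \<in> range ns then psi else drun A w psi ns n)"

(* |<psi|s>|^2 *)
definition overlap :: "complex vec \<Rightarrow> complex vec \<Rightarrow> real" where
  "overlap psi s = (cmod (s \<bullet>c psi))\<^sup>2"

definition fD_values :: "qa \<Rightarrow> (nat \<Rightarrow> nat) \<Rightarrow> real set" where
  "fD_values A w = {(INF i. overlap psi (drun A w psi ns (ns i))) | psi ns.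
       psi \<in> qa_F A \<and> unit_vec_in (qa_dim A) psi \<and> strict_mono ns}"

(* sup over an empty set is taken to be 0 *)
definition fD :: "qa \<Rightarrow> (nat \<Rightarrow> nat) \<Rightarrow> real" where
  "fD A w = (if fD_values A w = {} then 0 else Sup (fD_values A w))"

definition lang_D :: "nat set \<Rightarrow> real \<Rightarrow> qa \<Rightarrow> (nat \<Rightarrow> nat) set" where
  "lang_D Sg lam A = {w \<in> omega_words Sg. fD A w > lam}"

definition QBA_D_class :: "nat set \<Rightarrow> real \<Rightarrow> (nat \<Rightarrow> nat) set set" where
  "QBA_D_class Sg lam = {lang_D Sg lam A | A. is_qa Sg A}"

end

theory Submission
  imports Defs
begin

lemma sprod_mat_vec:
  fixes A :: "complex mat"
  assumes A: "A \<in> carrier_mat n n" and v: "v \<in> carrier_vec n" and w: "w \<in> carrier_vec n"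
  shows "v \<bullet> (A *\<^sub>v w) = (transpose_mat A *\<^sub>v v) \<bullet> w"
proof -
  have "v \<bullet> (A *\<^sub>v w) = (\<Sum>i<n. v $ i * (\<Sum>j<n. A $$ (i,j) * w $ j))"
    using A v w by (simp add: scalar_prod_def row_def lessThan_atLeast0)
  also have "\<dots> = (\<Sum>i<n. \<Sum>j<n. v $ i * A $$ (i,j) * w $ j)"
    by (simp add: sum_distrib_left mult.assoc)
  also have "\<dots> = (\<Sum>j<n. \<Sum>i<n. v $ i * A $$ (i,j) * w $ j)"
    by (rule sum.swap)
  also have "\<dots> = (\<Sum>j<n. (\<Sum>i<n. A $$ (i,j) * v $ i) * w $ j)"
    by (rule sum.cong[OF refl], simp add: sum_distrib_right, rule sum.cong[OF refl], simp add: mult_ac)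
  also have "\<dots> = (transpose_mat A *\<^sub>v v) \<bullet> w"
    using A v w by (simp add: scalar_prod_def row_def col_def lessThan_atLeast0)
  finally show ?thesis .
qed

lemma conj_mult_mat_vec:
  assumes A: "A \<in> carrier_mat n n" and w: "w \<in> carrier_vec n"
  shows "conjugate (A *\<^sub>v w) = mat n n (\<lambda>(i,j). cnj (A $$ (i,j))) *\<^sub>v conjugate w"
  apply (rule eq_vecI)
  using A w by (auto simp: scalar_prod_def row_def)

lemma inner_unitary:
  assumes U: "unitary_mat n U" and x: "x \<in> carrier_vec n" and y: "y \<in> carrier_vec n"
  shows "(U *\<^sub>v x) \<bullet>c (U *\<^sub>v y) = x \<bullet>c y"
proof -
  have Uc: "U \<in> carrier_mat n n" and I: "cadj U * U = 1\<^sub>m n" using U by (auto simp: unitary_mat_def)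
  define C where "C = mat n n (\<lambda>(i,j). cnj (U $$ (i,j)))"
  have Cc: "C \<in> carrier_mat n n" by (simp add: C_def)
  have tC: "transpose_mat C = cadj U" using Uc by (auto simp: C_def cadj_def)
  have "(U *\<^sub>v x) \<bullet>c (U *\<^sub>v y) = (U *\<^sub>v x) \<bullet> (C *\<^sub>v conjugate y)"
    using conj_mult_mat_vec[OF Uc y] by (simp add: C_def)
  also have "\<dots> = (cadj U *\<^sub>v (U *\<^sub>v x)) \<bullet> conjugate y"
    using sprod_mat_vec[OF Cc, of "U *\<^sub>v x" "conjugate y"] Uc x y tC by simp
  also have "cadj U *\<^sub>v (U *\<^sub>v x) = x"
  proof -
    have cc: "cadj U \<in> carrier_mat n n" using Uc by (simp add: cadj_def)
    have "cadj U *\<^sub>v (U *\<^sub>v x) = (cadj U * U) *\<^sub>v x" using cc Uc x by simp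
    thus ?thesis using I x by simp
  qed
  finally show ?thesis .
qed

lemma unit_unitary:
  assumes U: "unitary_mat n U" and x: "unit_vec_in n x"
  shows "unit_vec_in n (U *\<^sub>v x)"
  using inner_unitary[OF U, of x x] U x by (auto simp: unit_vec_in_def unitary_mat_def)

lemma sprod_self_real:
  assumes v: "v \<in> carrier_vec n"
  shows "v \<bullet>c v = complex_of_real (\<Sum>t<n. (cmod (v $ t))\<^sup>2)"
  using v apply (simp add: scalar_prod_def lessThan_atLeast0 of_real_sum del: complex_mult_cnj)
  apply (rule sum.cong[OF refl])
  by (metis complex_norm_square of_real_power)

lemma unit_coord:
  assumes u: "unit_vec_in n v" and t: "t < n"
  shows "cmod (v $ t) \<le> 1"
proof -
  have v: "v \<in> carrier_vec n" and e: "v \<bullet>c v = 1" using u by (auto simp: unit_vec_in_def)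
  have s: "(\<Sum>t<n. (cmod (v $ t))\<^sup>2) = 1" using sprod_self_real[OF v] e
    by (metis of_real_eq_1_iff)
  have "(cmod (v $ t))\<^sup>2 \<le> (\<Sum>t<n. (cmod (v $ t))\<^sup>2)"
    by (rule member_le_sum) (use t in auto)
  hence "(cmod (v $ t))\<^sup>2 \<le> 1" using s by simp
  thus ?thesis by (simp add: power_le_one_iff abs_le_square_iff)
qed

lemma overlap_nonneg: "0 \<le> overlap psi s" by (simp add: overlap_def)

lemma overlap_bound:
  assumes s: "unit_vec_in n s" and p: "unit_vec_in n psi"
  shows "overlap psi s \<le> (real n)\<^sup>2"
proof -
  have sc: "s \<in> carrier_vec n" and pc: "psi \<in> carrier_vec n" using s p by (auto simp: unit_vec_in_def)
  have "cmod (s \<bullet>c psi) = cmod (\<Sum>t<n. s $ t * cnj (psi $ t))"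
    using sc pc by (simp add: scalar_prod_def lessThan_atLeast0)
  also have "\<dots> \<le> (\<Sum>t<n. cmod (s $ t * cnj (psi $ t)))" by (rule norm_sum)
  also have "\<dots> \<le> (\<Sum>t<n. 1)"
  proof (rule sum_mono)
    fix t assume "t \<in> {..<n}"
    hence t: "t < n" by simp
    have "cmod (s $ t * cnj (psi $ t)) = cmod (s $ t) * cmod (psi $ t)" by (simp add: norm_mult)
    also have "\<dots> \<le> 1 * 1" by (rule mult_mono) (use unit_coord[OF s t] unit_coord[OF p t] in auto)
    finally show "cmod (s $ t * cnj (psi $ t)) \<le> 1" by simp
  qed
  also have "\<dots> = real n" by simp
  finally have "cmod (s \<bullet>c psi) \<le> real n" .
  thus ?thesis unfolding overlap_def by (simp add: power_mono)
qed

lemma drun_unit: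
  assumes A: "is_qa Sg A" and w: "w \<in> omega_words Sg" and p: "unit_vec_in (qa_dim A) psi"
  shows "unit_vec_in (qa_dim A) (drun A w psi ns m)"
proof (induction m)
  case 0 then show ?case using A by (simp add: is_qa_def)
next
  case (Suc m)
  have U: "unitary_mat (qa_dim A) (qa_U A (w m))" using A w by (auto simp: is_qa_def omega_words_def)
  show ?case using unit_unitary[OF U] Suc p by simp
qed

lemma fD_values_bdd:
  assumes A: "is_qa Sg A" and w: "w \<in> omega_words Sg"
  shows "bdd_above (fD_values A w)"
proof (rule bdd_aboveI)
  fix x assume "x \<in> fD_values A w"
  then obtain psi ns where x: "x = (INF i. overlap psi (drun A w psi ns (ns i)))"
    and p: "unit_vec_in (qa_dim A) psi" unfolding fD_values_def by blast
  have "x \<le> overlap psi (drun A w psi ns (ns 0))" unfolding x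
    by (rule cINF_lower) (auto intro!: bdd_belowI[of _ 0] simp: overlap_nonneg)
  also have "\<dots> \<le> (real (qa_dim A))\<^sup>2"
    by (rule overlap_bound[OF drun_unit[OF A w p] p])
  finally show "x \<le> (real (qa_dim A))\<^sup>2" .
qed

lemma fD_ge:
  assumes A: "is_qa Sg A" and w: "w \<in> omega_words Sg" and x: "x \<in> fD_values A w"
  shows "x \<le> fD A w"
  using x cSup_upper[OF x fD_values_bdd[OF A w]] by (auto simp: fD_def)

lemma fD_gt:
  assumes "fD A w > lam" and "0 \<le> lam"
  shows "\<exists>psi ns. psi \<in> qa_F A \<and> unit_vec_in (qa_dim A) psi \<and> strict_mono ns \<and>
           lam < (INF i. overlap psi (drun A w psi ns (ns i)))"
proof -
  have ne: "fD_values A w \<noteq> {}" using assms by (auto simp: fD_def split: if_splits)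
  hence "lam < Sup (fD_values A w)" using assms by (simp add: fD_def)
  then obtain x where "x \<in> fD_values A w" "lam < x" using less_cSupD[OF ne] by blast
  thus ?thesis unfolding fD_values_def by blast
qed

fun frun :: "qa \<Rightarrow> (nat \<Rightarrow> nat) \<Rightarrow> nat \<Rightarrow> complex vec" where
  "frun A w 0 = qa_init A"
| "frun A w (Suc m) = qa_U A (w m) *\<^sub>v frun A w m"

lemma drun_frun:
  assumes "\<forall>i. m \<le> ns i" and "j \<le> m"
  shows "drun A w psi ns j = frun A w j"
  using assms(2)
proof (induction j)
  case 0 then show ?case by simp
next
  case (Suc j)
  have "j \<notin> range ns"
  proof
    assume "j \<in> range ns"
    then obtain x where "j = ns x" by auto
    with assms(1) have "m \<le> j" by simp
    with Suc.prems show False by simp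
  qed
  thus ?case using Suc by simp
qed

lemma frun_cong:
  assumes "\<forall>j<m. w j = w' j"
  shows "frun A w m = frun A w' m"
  using assms by (induction m) auto

lemma drun_periodic:
  assumes c: "\<forall>j\<ge>m. w j = c" and k: "1 \<le> k" and ns: "ns = (\<lambda>i. m + i * k)"
    and j: "1 \<le> j" "j \<le> k"
  shows "drun A w psi ns (m + i * k + j) = (((*\<^sub>v) (qa_U A c)) ^^ j) psi"
  using j
proof (induction j)
  case 0 then show ?case by simp
next
  case (Suc j)
  show ?case
  proof (cases "j = 0")
    case True
    have "m + i * k \<in> range ns" using ns by auto
    thus ?thesis using True c by simp
  next
    case False
    have nr: "m + i * k + j \<notin> range ns"
    proof
      assume "m + i * k + j \<in> range ns"
      then obtain i' where "m + i * k + j = ns i'" by auto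
      hence e: "m + i * k + j = m + i' * k" using ns by simp
      hence e2: "i * k + j = i' * k" by simp
      have "j < k" using Suc.prems by simp
      have "i' * k \<le> i * k \<or> (i+1) * k \<le> i' * k"
      proof (cases "i' \<le> i")
        case True then show ?thesis by (simp add: mult_le_mono1)
      next
        case False then have "i + 1 \<le> i'" by simp
        then show ?thesis using mult_le_mono1[of "i+1" i' k] by simp
      qed
      moreover have d: "(i+1)*k = i*k + k" by simp
      ultimately show False using e2 \<open>j < k\<close> False by (elim disjE; linarith)
    qed
    have "w (m + i * k + j) = c" using c by simp
    thus ?thesis using nr Suc False by simp
  qed
qed

lemma periodic_witness:
  assumes A: "is_qa Sg A" and w: "w \<in> omega_words Sg" and c: "\<forall>j\<ge>m. w j = c"
    and k: "1 \<le> k" and pF: "psi \<in> qa_F A" and pu: "unit_vec_in (qa_dim A) psi"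
    and o1: "lam < overlap psi (frun A w m)"
    and o2: "lam < overlap psi ((((*\<^sub>v) (qa_U A c)) ^^ k) psi)"
  shows "w \<in> lang_D Sg lam A"
proof -
  define ns where "ns = (\<lambda>i::nat. m + i * k)"
  have sm: "strict_mono ns" unfolding ns_def using k by (intro strict_monoI) simp
  have ov: "min (overlap psi (frun A w m)) (overlap psi ((((*\<^sub>v) (qa_U A c)) ^^ k) psi))
             \<le> overlap psi (drun A w psi ns (ns i))" for i
  proof (cases i)
    case 0
    have "drun A w psi ns m = frun A w m"
      by (rule drun_frun[of m ns m]) (auto simp: ns_def)
    moreover have "ns i = m" using 0 by (simp add: ns_def)
    ultimately show ?thesis by simp
  next
    case (Suc i')
    have "ns i = m + i' * k + k" using Suc by (simp add: ns_def)
    moreover have "drun A w psi ns (m + i' * k + k) = (((*\<^sub>v) (qa_U A c)) ^^ k) psi"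
      by (rule drun_periodic[OF c k ns_def]) (use k in auto)
    ultimately show ?thesis by simp
  qed
  have "min (overlap psi (frun A w m)) (overlap psi ((((*\<^sub>v) (qa_U A c)) ^^ k) psi))
        \<le> (INF i. overlap psi (drun A w psi ns (ns i)))"
    by (rule cINF_greatest) (rule UNIV_not_empty, rule ov)
  moreover have "(INF i. overlap psi (drun A w psi ns (ns i))) \<in> fD_values A w"
    unfolding fD_values_def using pF pu sm by blast
  ultimately have "min (overlap psi (frun A w m)) (overlap psi ((((*\<^sub>v) (qa_U A c)) ^^ k) psi)) \<le> fD A w"
    using fD_ge[OF A w] order_trans by blast
  moreover have "lam < min (overlap psi (frun A w m)) (overlap psi ((((*\<^sub>v) (qa_U A c)) ^^ k) psi))"
    using o1 o2 by simp
  ultimately have "lam < fD A w" by linarith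
  thus ?thesis using w by (simp add: lang_D_def)
qed

lemma floor_close:
  fixes x y :: real
  assumes "\<lfloor>x\<rfloor> = \<lfloor>y\<rfloor>"
  shows "\<bar>x - y\<bar> < 1"
  using assms floor_eq_iff[of x "\<lfloor>y\<rfloor>"] floor_eq_iff[of y "\<lfloor>y\<rfloor>"] by linarith

lemma floor_close_scaled:
  fixes x y M :: real
  assumes "\<lfloor>x * M\<rfloor> = \<lfloor>y * M\<rfloor>" and "M > 0"
  shows "\<bar>x - y\<bar> < 1 / M"
proof -
  have "\<bar>x * M - y * M\<bar> < 1" by (rule floor_close[OF assms(1)])
  hence "\<bar>x - y\<bar> * M < 1" using assms(2) by (simp add: left_diff_distrib[symmetric] abs_mult)
  thus ?thesis using assms(2) by (simp add: field_simps)
qed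

lemma floor_range:
  fixes x M :: real
  assumes "\<bar>x\<bar> \<le> 1" and "M > 0"
  shows "\<lfloor>x * M\<rfloor> \<in> {-\<lceil>M\<rceil>..\<lceil>M\<rceil>}"
proof -
  have x: "-1 \<le> x" "x \<le> 1" using assms(1) by linarith+
  have a: "-M \<le> x * M" "x * M \<le> M"
    using mult_right_mono[OF x(1), of M] mult_right_mono[OF x(2), of M] assms(2) by simp_all
  have "\<lfloor>-M\<rfloor> \<le> \<lfloor>x * M\<rfloor>" "\<lfloor>x * M\<rfloor> \<le> \<lfloor>M\<rfloor>" using a floor_mono by auto
  moreover have "\<lfloor>M\<rfloor> \<le> \<lceil>M\<rceil>" by (rule floor_le_ceiling)
  moreover have "\<lfloor>-M\<rfloor> = -\<lceil>M\<rceil>" by (simp add: ceiling_def)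
  ultimately have "\<lfloor>x * M\<rfloor> \<le> \<lceil>M\<rceil>" "-\<lceil>M\<rceil> \<le> \<lfloor>x * M\<rfloor>" by linarith+
  thus ?thesis by simp
qed

lemma recurrence:
  assumes V: "unitary_mat n V" and p: "unit_vec_in n psi" and lam: "lam < 1"
  shows "\<exists>k\<ge>1. lam < overlap psi ((((*\<^sub>v) V) ^^ k) psi)"
proof (cases "lam < 0")
  case True
  thus ?thesis using overlap_nonneg by (meson le_refl less_le_trans)
next
  case False
  hence lam0: "0 \<le> lam" by simp
  define W where "W j = (((*\<^sub>v) V) ^^ j) psi" for j
  have Wu: "unit_vec_in n (W j)" for j
    by (induction j) (auto simp: W_def p unit_unitary[OF V])
  have Wc: "W j \<in> carrier_vec n" for j using Wu[of j] by (simp add: unit_vec_in_def)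
  have WS: "W (Suc j) = V *\<^sub>v W j" for j by (simp add: W_def)
  have shift: "W (i + d) \<bullet>c W i = W d \<bullet>c W 0" for i d
  proof (induction i)
    case 0 then show ?case by simp
  next
    case (Suc i)
    have "W (Suc i + d) \<bullet>c W (Suc i) = (V *\<^sub>v W (i + d)) \<bullet>c (V *\<^sub>v W i)"
      by (simp add: WS)
    also have "\<dots> = W (i + d) \<bullet>c W i" by (rule inner_unitary[OF V Wc Wc])
    finally show ?case using Suc by simp
  qed
  define eta where "eta = (1 - lam) / (2 * (real n + 1))"
  have eta0: "eta > 0" using lam by (simp add: eta_def)
  define M where "M = 2 / eta"
  have M0: "M > 0" using eta0 by (simp add: M_def)
  define K where "K = \<lceil>M\<rceil>"
  define S where "S = {-K..K} \<times> {-K..K}"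
  define cell where "cell v = map (\<lambda>t. (\<lfloor>Re (v $ t) * M\<rfloor>, \<lfloor>Im (v $ t) * M\<rfloor>)) [0..<n]" for v :: "complex vec"
  have cellS: "cell (W j) \<in> {xs. set xs \<subseteq> S \<and> length xs = n}" for j
  proof -
    have "\<lfloor>Re (W j $ t) * M\<rfloor> \<in> {-K..K} \<and> \<lfloor>Im (W j $ t) * M\<rfloor> \<in> {-K..K}" if t: "t < n" for t
    proof -
      have c: "cmod (W j $ t) \<le> 1" by (rule unit_coord[OF Wu t])
      have "\<bar>Re (W j $ t)\<bar> \<le> 1" "\<bar>Im (W j $ t)\<bar> \<le> 1"
        using c abs_Re_le_cmod[of "W j $ t"] abs_Im_le_cmod[of "W j $ t"] by linarith+
      thus ?thesis using floor_range M0 unfolding K_def by blast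
    qed
    thus ?thesis by (auto simp: cell_def S_def)
  qed
  have "finite (range (\<lambda>j. cell (W j)))"
    by (rule finite_subset[OF _ finite_lists_length_eq[of S n]]) (use cellS in \<open>auto simp: S_def\<close>)
  hence "\<not> inj (\<lambda>j. cell (W j))" using finite_imageD infinite_UNIV_nat by blast
  then obtain a b where ab: "a \<noteq> b" "cell (W a) = cell (W b)" unfolding inj_def by blast
  obtain i j where ij: "i < j" "cell (W i) = cell (W j)"
    using ab by (metis linorder_neqE_nat)
  have close: "cmod (W j $ t - W i $ t) < eta" if t: "t < n" for t
  proof -
    have e1: "\<lfloor>Re (W j $ t) * M\<rfloor> = \<lfloor>Re (W i $ t) * M\<rfloor>" and
         e2: "\<lfloor>Im (W j $ t) * M\<rfloor> = \<lfloor>Im (W i $ t) * M\<rfloor>"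
      using arg_cong[OF ij(2), of "\<lambda>xs. xs ! t"] t by (auto simp: cell_def)
    have "\<bar>Re (W j $ t) - Re (W i $ t)\<bar> < 1 / M" by (rule floor_close_scaled[OF e1 M0])
    moreover have "\<bar>Im (W j $ t) - Im (W i $ t)\<bar> < 1 / M" by (rule floor_close_scaled[OF e2 M0])
    moreover have "cmod (W j $ t - W i $ t) \<le> \<bar>Re (W j $ t) - Re (W i $ t)\<bar> + \<bar>Im (W j $ t) - Im (W i $ t)\<bar>"
      using cmod_le[of "W j $ t - W i $ t"] by simp
    moreover have "1 / M + 1 / M = eta" using eta0 by (simp add: M_def)
    ultimately show ?thesis by linarith
  qed
  define d where "d = j - i"
  have d1: "1 \<le> d" using ij by (simp add: d_def)
  have jd: "j = i + d" using ij by (simp add: d_def)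
  have "W j \<bullet>c W i - W i \<bullet>c W i = (\<Sum>t<n. (W j $ t - W i $ t) * cnj (W i $ t))"
    using Wc[of i] Wc[of j]
    by (simp add: scalar_prod_def lessThan_atLeast0 sum_subtractf[symmetric] left_diff_distrib)
  hence "cmod (W j \<bullet>c W i - 1) = cmod (\<Sum>t<n. (W j $ t - W i $ t) * cnj (W i $ t))"
    using Wu[of i] by (simp add: unit_vec_in_def)
  also have "\<dots> \<le> (\<Sum>t<n. cmod ((W j $ t - W i $ t) * cnj (W i $ t)))" by (rule norm_sum)
  also have "\<dots> \<le> (\<Sum>t<n. eta)"
  proof (rule sum_mono)
    fix t assume "t \<in> {..<n}"
    hence t: "t < n" by simp
    have "cmod ((W j $ t - W i $ t) * cnj (W i $ t)) = cmod (W j $ t - W i $ t) * cmod (W i $ t)"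
      by (simp add: norm_mult)
    also have "\<dots> \<le> eta * 1"
      by (rule mult_mono) (use close[OF t] unit_coord[OF Wu t] eta0 in auto)
    finally show "cmod ((W j $ t - W i $ t) * cnj (W i $ t)) \<le> eta" by simp
  qed
  also have "\<dots> = real n * eta" by simp
  finally have err: "cmod (W d \<bullet>c psi - 1) \<le> real n * eta"
    using shift[of i d] jd by (simp add: W_def)
  have "real n * eta \<le> (1 - lam) / 2"
    using lam by (simp add: eta_def field_simps)
  moreover have "1 - cmod (W d \<bullet>c psi) \<le> cmod (W d \<bullet>c psi - 1)"
    using norm_triangle_ineq2[of 1 "W d \<bullet>c psi"] by (simp add: norm_minus_commute)
  moreover have "(1 + lam) / 2 = 1 - (1 - lam) / 2" by (simp add: field_simps)
  ultimately have ge: "(1 + lam) / 2 \<le> cmod (W d \<bullet>c psi)" using err by linarith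
  have "((1 + lam) / 2)\<^sup>2 \<le> (cmod (W d \<bullet>c psi))\<^sup>2"
    by (rule power_mono[OF ge]) (use lam0 in simp)
  moreover have "lam < ((1 + lam) / 2)\<^sup>2"
  proof -
    have "0 < ((1 - lam) / 2)\<^sup>2" using lam by simp
    thus ?thesis by (simp add: power2_eq_square field_simps)
  qed
  ultimately have "lam < overlap psi (W d)" by (simp add: overlap_def)
  thus ?thesis using d1 by (auto simp: W_def)
qed

lemma pump:
  assumes A: "is_qa Sg A" and lam0: "0 \<le> lam" and lam1: "lam < 1"
    and w: "w \<in> lang_D Sg lam A" and c: "c \<in> Sg"
  shows "\<exists>n. (\<lambda>j. if j < n then w j else c) \<in> lang_D Sg lam A"
proof -
  have wo: "w \<in> omega_words Sg" and f: "lam < fD A w" using w by (auto simp: lang_D_def)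
  obtain psi ns where pF: "psi \<in> qa_F A" and pu: "unit_vec_in (qa_dim A) psi"
    and sm: "strict_mono ns" and inf: "lam < (INF i. overlap psi (drun A w psi ns (ns i)))"
    using fD_gt[OF f lam0] by blast
  define n where "n = ns 0"
  define w' where "w' = (\<lambda>j. if j < n then w j else c)"
  have "(INF i. overlap psi (drun A w psi ns (ns i))) \<le> overlap psi (drun A w psi ns (ns 0))"
    by (rule cINF_lower) (auto intro!: bdd_belowI[of _ 0] simp: overlap_nonneg)
  hence o1': "lam < overlap psi (drun A w psi ns n)" using inf by (simp add: n_def)
  have ge: "\<forall>i. n \<le> ns i" using sm by (simp add: n_def strict_mono_less_eq)
  have "drun A w psi ns n = frun A w n" by (rule drun_frun[OF ge]) simp
  also have "\<dots> = frun A w' n" by (rule frun_cong) (simp add: w'_def)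
  finally have o1: "lam < overlap psi (frun A w' n)" using o1' by simp
  have U: "unitary_mat (qa_dim A) (qa_U A c)" using A c by (simp add: is_qa_def)
  obtain k where k: "1 \<le> k" "lam < overlap psi ((((*\<^sub>v) (qa_U A c)) ^^ k) psi)"
    using recurrence[OF U pu lam1] by blast
  have wo': "w' \<in> omega_words Sg" using wo c by (auto simp: omega_words_def w'_def)
  have "w' \<in> lang_D Sg lam A"
    by (rule periodic_witness[OF A wo' _ k(1) pF pu o1 k(2)]) (simp add: w'_def)
  thus ?thesis unfolding w'_def by blast
qed

definition Xm :: "complex mat" where "Xm = mat 2 2 (\<lambda>(i,j). if i = j then 0 else 1)"

definition Aut :: "nat \<Rightarrow> qa" where
  "Aut ib = \<lparr>qa_dim = 2, qa_init = unit_vec 2 ib, qa_U = (\<lambda>l. if l = 1 then Xm else 1\<^sub>m 2),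
     qa_F = {v \<in> carrier_vec 2. v $ 1 = 0}\<rparr>"

lemma two_set: "{0..<2::nat} = {0,1}" by auto

lemma Xm_carrier[simp]: "Xm \<in> carrier_mat 2 2" by (simp add: Xm_def)

lemma Xv:
  assumes "v \<in> carrier_vec 2"
  shows "(Xm *\<^sub>v v) $ 0 = v $ 1" "(Xm *\<^sub>v v) $ 1 = v $ 0" "Xm *\<^sub>v v \<in> carrier_vec 2"
  using assms mult_mat_vec_carrier[OF Xm_carrier assms] by (auto simp: Xm_def scalar_prod_def row_def two_set)

lemma Xe0: "Xm *\<^sub>v unit_vec 2 0 = unit_vec 2 1"
proof (rule eq_vecI)
  fix i assume "i < dim_vec (unit_vec 2 1 :: complex vec)"
  hence "i = 0 \<or> i = 1" by auto
  thus "(Xm *\<^sub>v unit_vec 2 0) $ i = unit_vec 2 1 $ i" using Xv[of "unit_vec 2 0"] by auto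
qed (simp add: Xm_def)

lemma Xe1: "Xm *\<^sub>v unit_vec 2 1 = unit_vec 2 0"
proof (rule eq_vecI)
  fix i assume "i < dim_vec (unit_vec 2 0 :: complex vec)"
  hence "i = 0 \<or> i = 1" by auto
  thus "(Xm *\<^sub>v unit_vec 2 1) $ i = unit_vec 2 0 $ i" using Xv[of "unit_vec 2 1"] by auto
qed (simp add: Xm_def)

lemma Xe1': "Xm *\<^sub>v unit_vec 2 (Suc 0) = unit_vec 2 0" using Xe1 by simp

lemma cadj_Xm: "cadj Xm = Xm"
  by (rule eq_matI) (auto simp: cadj_def Xm_def)

lemma Xm_sq: "Xm * Xm = 1\<^sub>m 2"
  by (rule eq_matI) (auto simp: Xm_def scalar_prod_def row_def col_def two_set)

lemma Xm_unitary: "unitary_mat 2 Xm"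
  by (simp add: unitary_mat_def cadj_Xm Xm_sq)

lemma one_unitary: "unitary_mat 2 (1\<^sub>m 2)"
proof -
  have "cadj (1\<^sub>m 2) = (1\<^sub>m 2 :: complex mat)" by (rule eq_matI) (auto simp: cadj_def)
  thus ?thesis by (simp add: unitary_mat_def)
qed

lemma unit_e: "i < 2 \<Longrightarrow> unit_vec_in 2 (unit_vec 2 i :: complex vec)"
  by (auto simp: unit_vec_in_def scalar_prod_def two_set)

lemma is_qa_Aut: "ib < 2 \<Longrightarrow> is_qa {0,1} (Aut ib)"
  by (auto simp: is_qa_def Aut_def unit_e Xm_unitary one_unitary subspace_of_def)

lemma overlap_e0: "overlap (unit_vec 2 0) (unit_vec 2 0) = 1"
  by (simp add: overlap_def scalar_prod_def two_set)

lemma F_e0: "unit_vec 2 0 \<in> qa_F (Aut ib)" by (simp add: Aut_def)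

lemma U_Aut: "qa_U (Aut ib) l = (if l = 1 then Xm else 1\<^sub>m 2)" by (simp add: Aut_def)

lemma XX_e0: "(((*\<^sub>v) (qa_U (Aut ib) 1)) ^^ 2) (unit_vec 2 0) = unit_vec 2 0"
proof -
  have "(((*\<^sub>v) Xm) ^^ Suc (Suc 0)) (unit_vec 2 0) = unit_vec 2 0" by (simp add: Xe0 Xe1 Xe1')
  thus ?thesis by (simp add: U_Aut numeral_2_eq_2)
qed

lemma witness_b:
  assumes ib: "ib < 2" and w: "w \<in> omega_words {0,1}" and c: "\<forall>j\<ge>m. w j = 1"
    and f: "frun (Aut ib) w m = unit_vec 2 0" and lam1: "lam < 1"
  shows "w \<in> lang_D {0,1} lam (Aut ib)"
proof -
  have o2: "overlap (unit_vec 2 0) (((*\<^sub>v) (qa_U (Aut ib) 1) ^^ 2) (unit_vec 2 0)) = 1"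
    by (simp only: XX_e0 overlap_e0)
  have o1: "overlap (unit_vec 2 0) (frun (Aut ib) w m) = 1" by (simp only: f overlap_e0)
  have pu: "unit_vec_in (qa_dim (Aut ib)) (unit_vec 2 0)" by (simp add: Aut_def unit_e)
  show ?thesis
    by (rule periodic_witness[OF is_qa_Aut[OF ib] w c _ F_e0 pu, where k=2]) (use o1 o2 lam1 in auto)
qed

fun cnt :: "(nat \<Rightarrow> nat) \<Rightarrow> nat \<Rightarrow> nat" where
  "cnt w 0 = 0"
| "cnt w (Suc m) = cnt w m + (if w m = 1 then 1 else 0)"

lemma claim:
  assumes w: "w \<in> omega_words {0,1}" and pF: "psi \<in> qa_F (Aut ib)" and ib: "ib < 2"
  shows "(\<forall>i. ns i < m \<longrightarrow> drun (Aut ib) w psi ns (ns i) $ 0 \<noteq> 0) \<Longrightarrow>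
     drun (Aut ib) w psi ns m \<in> carrier_vec 2 \<and>
     drun (Aut ib) w psi ns m $ (if odd (cnt w m + ib) then 0 else 1) = 0"
proof (induction m)
  case 0
  have "ib = 0 \<or> ib = 1" using ib by auto
  thus ?case by (auto simp: Aut_def)
next
  case (Suc m)
  have H: "\<forall>i. ns i < m \<longrightarrow> drun (Aut ib) w psi ns (ns i) $ 0 \<noteq> 0" using Suc.prems by auto
  note IH = Suc.IH[OF H]
  have pc: "psi \<in> carrier_vec 2" and p1: "psi $ 1 = 0" using pF by (auto simp: Aut_def)
  have wm: "w m = 0 \<or> w m = 1" using w by (auto simp: omega_words_def)
  show ?case
  proof (cases "m \<in> range ns")
    case True
    then obtain i where i: "m = ns i" by auto
    have nz: "drun (Aut ib) w psi ns m $ 0 \<noteq> 0" using Suc.prems i by auto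
    have c2: "drun (Aut ib) w psi ns m $ (if odd (cnt w m + ib) then 0 else 1) = 0" using IH by blast
    have ev: "\<not> odd (cnt w m + ib)"
    proof
      assume o: "odd (cnt w m + ib)"
      hence "(if odd (cnt w m + ib) then 0 else 1) = (0::nat)" by simp
      with c2 nz show False by metis
    qed
    show ?thesis using True wm ev pc p1 Xv[OF pc] by (auto simp: U_Aut)
  next
    case False
    let ?s = "drun (Aut ib) w psi ns m"
    have sc: "?s \<in> carrier_vec 2" using IH by simp
    show ?thesis using False wm IH Xv[OF sc] by (auto simp: U_Aut)
  qed
qed

lemma overlap_zero:
  assumes "s \<in> carrier_vec 2" "psi \<in> qa_F (Aut ib)" "s $ 0 = 0"
  shows "overlap psi s = 0"
  using assms by (auto simp: overlap_def scalar_prod_def two_set Aut_def)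

lemma cnt_tail:
  assumes "\<forall>j\<ge>n. w j = 0" "n \<le> m"
  shows "cnt w m = cnt w n"
  using assms(2)
proof (induction m)
  case 0 then show ?case by simp
next
  case (Suc m)
  show ?case
  proof (cases "n = Suc m")
    case False
    hence "n \<le> m" using Suc.prems by simp
    thus ?thesis using Suc.IH assms(1) by simp
  qed simp
qed

lemma not_in:
  assumes w: "w \<in> omega_words {0,1}" and ib: "ib < 2" and tail: "\<forall>j\<ge>n. w j = 0"
    and od: "odd (cnt w n + ib)" and lam0: "0 \<le> lam"
  shows "w \<notin> lang_D {0,1} lam (Aut ib)"
proof -
  have le: "x \<le> lam" if x: "x \<in> fD_values (Aut ib) w" for x
  proof (rule ccontr)
    assume "\<not> x \<le> lam"
    hence xl: "lam < x" by simp
    obtain psi ns where xd: "x = (INF i. overlap psi (drun (Aut ib) w psi ns (ns i)))"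
      and pF: "psi \<in> qa_F (Aut ib)" and pu: "unit_vec_in 2 psi" and sm: "strict_mono ns"
      using x unfolding fD_values_def by (auto simp: Aut_def)
    have pu': "unit_vec_in (qa_dim (Aut ib)) psi" using pu by (simp add: Aut_def)
    have nz: "drun (Aut ib) w psi ns (ns i) $ 0 \<noteq> 0" for i
    proof
      assume z: "drun (Aut ib) w psi ns (ns i) $ 0 = 0"
      have sc: "drun (Aut ib) w psi ns (ns i) \<in> carrier_vec 2"
        using drun_unit[OF is_qa_Aut[OF ib] w pu'] by (simp add: unit_vec_in_def Aut_def)
      have "x \<le> overlap psi (drun (Aut ib) w psi ns (ns i))" unfolding xd
        by (rule cINF_lower) (auto intro!: bdd_belowI[of _ 0] simp: overlap_nonneg)
      also have "\<dots> = 0" by (rule overlap_zero[OF sc pF z])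
      finally show False using xl lam0 by simp
    qed
    have "drun (Aut ib) w psi ns (ns n) $ (if odd (cnt w (ns n) + ib) then 0 else 1) = 0"
      using claim[OF w pF ib, of ns "ns n"] nz by auto
    moreover have "cnt w (ns n) = cnt w n" by (rule cnt_tail[OF tail]) (rule seq_suble[OF sm])
    ultimately show False using od nz[of n] by simp
  qed
  have "fD (Aut ib) w \<le> lam"
  proof (cases "fD_values (Aut ib) w = {}")
    case True thus ?thesis using lam0 by (simp add: fD_def)
  next
    case False thus ?thesis using le by (simp add: fD_def cSup_least)
  qed
  thus ?thesis by (simp add: lang_D_def)
qed

lemma frun_basis:
  assumes w: "w \<in> omega_words {0,1}" and ib: "ib < 2"
  shows "frun (Aut ib) w m = unit_vec 2 0 \<or> frun (Aut ib) w m = unit_vec 2 1"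
proof (induction m)
  case 0 then show ?case using ib by (auto simp: Aut_def less_2_cases_iff)
next
  case (Suc m)
  have "w m = 0 \<or> w m = 1" using w by (auto simp: omega_words_def)
  then show ?case using Suc by (auto simp: U_Aut Xe0 Xe1 Xe1')
qed

lemma cnt_prefix1: "m \<le> n \<Longrightarrow> cnt (\<lambda>j. if j < n then 1 else 0) m = m"
  by (induction m) auto

theorem theorem11:
  fixes lam :: real
  assumes "0 \<le> lam" and "lam < 1"
  shows "(\<exists>Sg. finite Sg \<and> (\<exists>L1\<in>QBA_D_class Sg lam. \<exists>L2\<in>QBA_D_class Sg lam.
            L1 \<inter> L2 \<notin> QBA_D_class Sg lam))
       \<and> (\<exists>Sg. finite Sg \<and> (\<exists>L\<in>QBA_D_class Sg lam.
            omega_words Sg - L \<notin> QBA_D_class Sg lam))"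
proof -
  note lam0 = assms(1) and lam1 = assms(2)
  define Sg :: "nat set" where "Sg = {0,1}"
  have fin: "finite Sg" by (simp add: Sg_def)
  have L0: "lang_D Sg lam (Aut 0) \<in> QBA_D_class Sg lam"
    unfolding QBA_D_class_def Sg_def using is_qa_Aut[of 0] by auto
  have L1: "lang_D Sg lam (Aut 1) \<in> QBA_D_class Sg lam"
    unfolding QBA_D_class_def Sg_def using is_qa_Aut[of 1] by auto
  have part1: "lang_D Sg lam (Aut 0) \<inter> lang_D Sg lam (Aut 1) \<notin> QBA_D_class Sg lam"
  proof
    assume "lang_D Sg lam (Aut 0) \<inter> lang_D Sg lam (Aut 1) \<in> QBA_D_class Sg lam"
    then obtain B where B: "is_qa Sg B"
      and eq: "lang_D Sg lam (Aut 0) \<inter> lang_D Sg lam (Aut 1) = lang_D Sg lam B"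
      unfolding QBA_D_class_def by auto
    define bw where "bw = (\<lambda>j::nat. 1::nat)"
    have bwo: "bw \<in> omega_words {0,1}" by (simp add: bw_def omega_words_def)
    have "bw \<in> lang_D {0,1} lam (Aut 0)"
      by (rule witness_b[where m=0]) (use bwo lam1 in \<open>auto simp: bw_def Aut_def\<close>)
    moreover have "bw \<in> lang_D {0,1} lam (Aut 1)"
    proof (rule witness_b[where m=1])
      show "frun (Aut 1) bw 1 = unit_vec 2 0" by (simp add: bw_def U_Aut Aut_def Xe1')
    qed (use bwo lam1 in \<open>auto simp: bw_def\<close>)
    ultimately have "bw \<in> lang_D Sg lam B" using eq by (auto simp: Sg_def)
    then obtain n where n: "(\<lambda>j. if j < n then bw j else 0) \<in> lang_D Sg lam B"
      using pump[OF B lam0 lam1, of bw 0] by (auto simp: Sg_def)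
    define y where "y = (\<lambda>j::nat. if j < n then 1 else (0::nat))"
    have yB: "y \<in> lang_D Sg lam (Aut 0) \<inter> lang_D Sg lam (Aut 1)"
    proof -
      have "(\<lambda>j. if j < n then bw j else 0) = y" unfolding y_def bw_def by (rule refl)
      thus ?thesis using n eq by simp
    qed
    have yo: "y \<in> omega_words {0,1}" by (simp add: y_def omega_words_def)
    have tail: "\<forall>j\<ge>n. y j = 0" by (simp add: y_def)
    have cn: "cnt y n = n" unfolding y_def by (rule cnt_prefix1) simp
    show False
    proof (cases "odd n")
      case True
      hence "y \<notin> lang_D {0,1} lam (Aut 0)" by (intro not_in[OF yo _ tail]) (use cn lam0 in auto)
      thus False using yB by (simp add: Sg_def)
    next
      case False
      hence "y \<notin> lang_D {0,1} lam (Aut 1)" by (intro not_in[OF yo _ tail]) (use cn lam0 in auto)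
      thus False using yB by (simp add: Sg_def)
    qed
  qed
  have part2: "omega_words Sg - lang_D Sg lam (Aut 0) \<notin> QBA_D_class Sg lam"
  proof
    assume "omega_words Sg - lang_D Sg lam (Aut 0) \<in> QBA_D_class Sg lam"
    then obtain B where B: "is_qa Sg B"
      and eq: "omega_words Sg - lang_D Sg lam (Aut 0) = lang_D Sg lam B"
      unfolding QBA_D_class_def by auto
    define w0 where "w0 = (\<lambda>j::nat. if j = 0 then 1 else (0::nat))"
    have w0o: "w0 \<in> omega_words {0,1}" by (simp add: w0_def omega_words_def)
    have "w0 \<notin> lang_D {0,1} lam (Aut 0)"
      by (rule not_in[OF w0o _ _ _ lam0, where n=1]) (auto simp: w0_def)
    hence "w0 \<in> lang_D Sg lam B" using eq w0o by (auto simp: Sg_def)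
    then obtain n where n: "(\<lambda>j. if j < n then w0 j else 1) \<in> lang_D Sg lam B"
      using pump[OF B lam0 lam1, of w0 1] by (auto simp: Sg_def)
    define y where "y = (\<lambda>j. if j < n then w0 j else 1)"
    have yn: "y \<notin> lang_D Sg lam (Aut 0)" using n eq by (auto simp: y_def)
    have yo: "y \<in> omega_words {0,1}" by (auto simp: y_def w0_def omega_words_def)
    have "y \<in> lang_D {0,1} lam (Aut 0)"
    proof (cases "frun (Aut 0) y n = unit_vec 2 0")
      case True
      show ?thesis by (rule witness_b[OF _ yo _ True lam1]) (auto simp: y_def)
    next
      case False
      hence f1: "frun (Aut 0) y n = unit_vec 2 1" using frun_basis[OF yo, of 0 n] by auto
      have f0: "frun (Aut 0) y (Suc n) = unit_vec 2 0"
        using f1 by (simp add: U_Aut y_def Xe1 Xe1')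
      show ?thesis by (rule witness_b[OF _ yo _ f0 lam1]) (auto simp: y_def)
    qed
    thus False using yn by (simp add: Sg_def)
  qed
  show ?thesis using fin L0 L1 part1 part2 by blast
qed

end
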